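(* Let $(\Sigma,\mathsf{ar})$ be an at most countable binding signature with associated functors $F,F_\alpha$ and maps $a^{(n)}:F^n1\to F_\alpha^n1$. Then for every $n$, $a^{(n)}$ is surjective, has orbit-finite fibres, and is a safe map.
   Context: Nominal sets over a countably infinite set $\mathcal V$ of names; $[\mathcal V]X$ the name-abstraction with classes $\langle x\rangle u$. Binding signature: symbols $\mathsf{op}\in\Sigma$ with arities finite lists $(n_1,\dots,n_k)$. $F_\alpha X=\mathcal V+\coprod_{\mathsf{op}}\prod_i[\mathcal V]^{n_i}X$, $FX=\mathcal V+\coprod_{\mathsf{op}}\prod_i(\mathcal V^{n_i}\times X)$, $q_X:FX\to F_\alpha X$ identity on $\mathcal V$ and $(x^1,\dots,x^n,u)\mapsto\langle x^1\rangle\cdots\langle x^n\rangle u$ on each factor. $1=\{*\}$; $a^{(0)}=\mathrm{id}_1$, $a^{(n+1)}=q_{F_\alpha^n1}\circ F(a^{(n)})$. An orbit is an equivalence class of $u\sim\pi\cdot u$; a map has orbit-finite fibres if each fibre lies in finitely many orbits. $u$ is $f$-safe if $|\mathsf{supp}(u)|=\max\{|\mathsf{supp}(v)|:v\in f^{-1}(f(u))\}$; $f$ is safe if every element of the codomain has an $f$-safe preimage. *)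

theory Defs
  imports "HOL-Library.Countable"
begin

text \<open>Names: the countably infinite set V is represented by nat.
  Finitely supported permutations of names.\<close>

definition fperm :: "(nat \<Rightarrow> nat) \<Rightarrow> bool" where
  "fperm p \<longleftrightarrow> bij p \<and> finite {a. p a \<noteq> a}"

definition nswap :: "nat \<Rightarrow> nat \<Rightarrow> nat \<Rightarrow> nat" where
  "nswap a b = (\<lambda>c. if c = a then b else if c = b then a else c)"

text \<open>A universe of values in which all the nominal sets F^n 1 and F_alpha^n 1 live.
  Star is the element of 1; Nm a a name; Inj op t the coproduct injection of summand op;
  Tup ts a finite product (tuple); Pr s t a binary pair; Abs g a name-abstraction class,
  i.e. a set of pairs (y,v) (an equivalence class), encoded as the graph of the
  partial function g (each y occurs in at most one pair of such a class).\<close>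

datatype 'op nv = Star | Nm nat | Inj 'op "'op nv" | Tup "'op nv list"
  | Pr "'op nv" "'op nv" | Abs "nat \<Rightarrow> 'op nv option"

text \<open>The permutation action (on Abs: the pointwise action on the set of pairs).\<close>
primrec perm :: "(nat \<Rightarrow> nat) \<Rightarrow> 'op nv \<Rightarrow> 'op nv" where
  "perm p Star = Star"
| "perm p (Nm a) = Nm (p a)"
| "perm p (Inj c t) = Inj c (perm p t)"
| "perm p (Tup ts) = Tup (map (perm p) ts)"
| "perm p (Pr s t) = Pr (perm p s) (perm p t)"
| "perm p (Abs g) = Abs (\<lambda>y. map_option (perm p) (g (inv p y)))"

definition supp :: "'op nv \<Rightarrow> nat set" where
  "supp u = {a. infinite {b. perm (nswap a b) u \<noteq> u}}"

definition orbit :: "'op nv \<Rightarrow> 'op nv set" where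
  "orbit u = {perm p u | p. fperm p}"

definition alpha_rel :: "nat \<times> 'op nv \<Rightarrow> nat \<times> 'op nv \<Rightarrow> bool" where
  "alpha_rel xu yv \<longleftrightarrow> (case xu of (x, u) \<Rightarrow> case yv of (y, v) \<Rightarrow>
     (\<exists>z. z \<noteq> x \<and> z \<noteq> y \<and> z \<notin> supp u \<and> z \<notin> supp v
          \<and> perm (nswap x z) u = perm (nswap y z) v))"

definition abs_class :: "nat \<Rightarrow> 'op nv \<Rightarrow> 'op nv" where
  "abs_class x u = Abs (\<lambda>y. if (\<exists>v. alpha_rel (y, v) (x, u))
       then Some (THE v. alpha_rel (y, v) (x, u)) else None)"

primrec absn :: "nat \<Rightarrow> 'op nv set \<Rightarrow> 'op nv set" where
  "absn 0 X = X"
| "absn (Suc k) X = {abs_class x w | x w. w \<in> absn k X}"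

text \<open>F X = V + coprod_op prod_i (V^{n_i} x X)\<close>
definition Fset :: "('op \<Rightarrow> nat list) \<Rightarrow> 'op nv set \<Rightarrow> 'op nv set" where
  "Fset ar X = range Nm \<union> {Inj c (Tup ts) | c ts. list_all2
      (\<lambda>k t. \<exists>xs w. length xs = k \<and> w \<in> X \<and> t = Pr (Tup (map Nm xs)) w) (ar c) ts}"

text \<open>F_alpha X = V + coprod_op prod_i [V]^{n_i} X\<close>
definition Faset :: "('op \<Rightarrow> nat list) \<Rightarrow> 'op nv set \<Rightarrow> 'op nv set" where
  "Faset ar X = range Nm \<union> {Inj c (Tup ts) | c ts. list_all2
      (\<lambda>k t. t \<in> absn k X) (ar c) ts}"

primrec Fiter :: "('op \<Rightarrow> nat list) \<Rightarrow> nat \<Rightarrow> 'op nv set" where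
  "Fiter ar 0 = {Star}"
| "Fiter ar (Suc n) = Fset ar (Fiter ar n)"

primrec Faiter :: "('op \<Rightarrow> nat list) \<Rightarrow> nat \<Rightarrow> 'op nv set" where
  "Faiter ar 0 = {Star}"
| "Faiter ar (Suc n) = Faset ar (Faiter ar n)"

fun fmap_fac :: "('op nv \<Rightarrow> 'op nv) \<Rightarrow> 'op nv \<Rightarrow> 'op nv" where
  "fmap_fac f (Pr p w) = Pr p (f w)"
| "fmap_fac f t = t"

fun Fmap :: "('op nv \<Rightarrow> 'op nv) \<Rightarrow> 'op nv \<Rightarrow> 'op nv" where
  "Fmap f (Inj c (Tup ts)) = Inj c (Tup (map (fmap_fac f) ts))"
| "Fmap f t = t"

fun name_of :: "'op nv \<Rightarrow> nat" where
  "name_of (Nm a) = a"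
| "name_of _ = 0"

text \<open>q_X: (x^1,...,x^n,u) |-> <x^1>...<x^n>u on each factor, identity on V.\<close>
fun qfac :: "'op nv \<Rightarrow> 'op nv" where
  "qfac (Pr (Tup ns) w) = foldr (\<lambda>m acc. abs_class (name_of m) acc) ns w"
| "qfac t = t"

fun qmap :: "'op nv \<Rightarrow> 'op nv" where
  "qmap (Inj c (Tup ts)) = Inj c (Tup (map qfac ts))"
| "qmap t = t"

primrec amap :: "nat \<Rightarrow> 'op nv \<Rightarrow> 'op nv" where
  "amap 0 = id"
| "amap (Suc n) = qmap \<circ> Fmap (amap n)"

definition f_safe :: "('op nv \<Rightarrow> 'op nv) \<Rightarrow> 'op nv set \<Rightarrow> 'op nv \<Rightarrow> bool" where
  "f_safe f A u \<longleftrightarrow> u \<in> A \<and> (\<forall>v\<in>A. f v = f u \<longrightarrow> card (supp v) \<le> card (supp u))"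

definition safe_map :: "('op nv \<Rightarrow> 'op nv) \<Rightarrow> 'op nv set \<Rightarrow> 'op nv set \<Rightarrow> bool" where
  "safe_map f A B \<longleftrightarrow> (\<forall>y\<in>B. \<exists>u. f_safe f A u \<and> f u = y)"

definition orbit_finite_fibres :: "('op nv \<Rightarrow> 'op nv) \<Rightarrow> 'op nv set \<Rightarrow> 'op nv set \<Rightarrow> bool" where
  "orbit_finite_fibres f A B \<longleftrightarrow> (\<forall>y\<in>B. finite (orbit ` {x \<in> A. f x = y}))"

end

theory Submission
  imports Defs
begin


lemma bij_nswap[simp]: "bij (nswap a b)"
  unfolding nswap_def by (rule bij_betw_byWitness[where f'="nswap a b"]) (auto simp: nswap_def)

lemma nswap_nswap[simp]: "nswap a b (nswap a b c) = c"
  by (auto simp: nswap_def)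

lemma nswap_comp_self[simp]: "nswap a b \<circ> nswap a b = id"
  by (auto simp: fun_eq_iff)

lemma inv_nswap[simp]: "inv (nswap a b) = nswap a b"
  by (rule inv_unique_comp) auto

lemma nswap_same[simp]: "nswap a a = id"
  by (auto simp: nswap_def fun_eq_iff)

lemma nswap_app: "nswap a b a = b" "nswap a b b = a" "c \<noteq> a \<Longrightarrow> c \<noteq> b \<Longrightarrow> nswap a b c = c"
  by (auto simp: nswap_def)

lemma perm_id[simp]: "perm id u = u"
proof (induction u)
  case (Tup ts) then show ?case by (simp add: map_idI)
next
  case (Abs g)
  have "map_option (perm (\<lambda>a. a)) (g y) = g y" for y
    by (rule option.map_ident_strong) (use Abs.IH[OF rangeI] in \<open>auto simp: id_def\<close>)
  then show ?case by (simp add: fun_eq_iff id_def)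
qed auto

lemma perm_comp: "bij p \<Longrightarrow> bij q \<Longrightarrow> perm p (perm q u) = perm (p \<circ> q) u"
proof (induction u)
  case (Abs g)
  have i: "inv (p \<circ> q) y = inv q (inv p y)" for y using Abs.prems by (simp add: o_inv_distrib)
  have "map_option (perm p) (map_option (perm q) (g (inv q (inv p y)))) =
        map_option (perm (p \<circ> q)) (g (inv (p \<circ> q) y))" for y
    unfolding i option.map_comp by (rule option.map_cong0) (use Abs.IH[OF rangeI] Abs.prems in \<open>auto simp: comp_def\<close>)
  then show ?case by (simp only: perm.simps)
qed auto

lemma perm_inv_perm: "bij p \<Longrightarrow> perm (inv p) (perm p u) = u"
  by (simp add: perm_comp bij_imp_bij_inv bij_is_inj)

lemma perm_perm_inv: "bij p \<Longrightarrow> perm p (perm (inv p) u) = u"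
  by (simp add: perm_comp bij_imp_bij_inv surj_iff[THEN iffD1, OF bij_is_surj])

lemma perm_inj: "bij p \<Longrightarrow> perm p x = perm p y \<Longrightarrow> x = y"
  by (metis perm_inv_perm)

lemma perm_swap_swap[simp]: "perm (nswap a b) (perm (nswap a b) u) = u"
  by (simp add: perm_comp)

lemma swap_conj_fun: "bij p \<Longrightarrow> nswap (p a) (p b) \<circ> p = p \<circ> nswap a b"
  by (auto simp: fun_eq_iff nswap_def bij_is_inj inj_eq)

lemma perm_swap_conj: "bij p \<Longrightarrow> perm (nswap (p a) (p b)) (perm p u) = perm p (perm (nswap a b) u)"
  by (simp add: perm_comp swap_conj_fun)

lemma supp_perm_aux: assumes p: "bij p" and a: "a \<in> supp (perm p u)" shows "inv p a \<in> supp u"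
proof -
  let ?B = "{b. perm (nswap (inv p a) b) u \<noteq> u}"
  have "{b. perm (nswap a b) (perm p u) \<noteq> perm p u} \<subseteq> p ` ?B"
  proof
    fix b assume "b \<in> {b. perm (nswap a b) (perm p u) \<noteq> perm p u}"
    hence ne: "perm (nswap a b) (perm p u) \<noteq> perm p u" by simp
    have eq: "perm (nswap a b) (perm p u) = perm p (perm (nswap (inv p a) (inv p b)) u)"
      using perm_swap_conj[OF p, of "inv p a" "inv p b" u] p
      by (simp add: surj_f_inv_f[OF bij_is_surj[OF p]])
    have "perm (nswap (inv p a) (inv p b)) u \<noteq> u" using ne eq by auto
    thus "b \<in> p ` ?B" using p surj_f_inv_f[OF bij_is_surj[OF p]] by (auto intro!: image_eqI[of _ _ "inv p b"])
  qed
  moreover have "infinite {b. perm (nswap a b) (perm p u) \<noteq> perm p u}" using a by (simp add: supp_def)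
  ultimately have "infinite (p ` ?B)" using finite_subset by blast
  hence "infinite ?B" using finite_imageI by blast
  thus ?thesis by (simp add: supp_def)
qed

lemma supp_perm: assumes p: "bij p" shows "supp (perm p u) = p ` supp u"
proof
  show "supp (perm p u) \<subseteq> p ` supp u"
  proof
    fix x assume "x \<in> supp (perm p u)"
    hence "inv p x \<in> supp u" using supp_perm_aux[OF p] by blast
    thus "x \<in> p ` supp u" using surj_f_inv_f[OF bij_is_surj[OF p]] by (metis image_eqI)
  qed
next
  show "p ` supp u \<subseteq> supp (perm p u)"
  proof
    fix a assume "a \<in> p ` supp u"
    then obtain a0 where a0: "a0 \<in> supp u" "a = p a0" by auto
    have "a0 \<in> supp (perm (inv p) (perm p u))" using a0 p by (simp add: perm_inv_perm)
    from supp_perm_aux[OF bij_imp_bij_inv[OF p] this] p a0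
    show "a \<in> supp (perm p u)" by (simp add: inv_inv_eq)
  qed
qed

lemma fresh_ex: "finite (S::nat set) \<Longrightarrow> \<exists>z. z \<notin> S"
  by (metis ex_new_if_finite infinite_UNIV_nat)

lemma fresh_swap: assumes a: "a \<notin> supp u" and b: "b \<notin> supp u" shows "perm (nswap a b) u = u"
proof (cases "a = b")
  case False
  let ?S = "{c. perm (nswap a c) u \<noteq> u} \<union> {c. perm (nswap b c) u \<noteq> u} \<union> {a,b}"
  have f1: "finite {c. perm (nswap a c) u \<noteq> u}" using a unfolding supp_def by simp
  have f2: "finite {c. perm (nswap b c) u \<noteq> u}" using b unfolding supp_def by simp
  have fin: "finite ?S" using f1 f2 by simp
  from fresh_ex[OF fin] obtain c where c: "c \<notin> ?S" ..
  have c1: "perm (nswap a c) u = u" using c by simp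
  have c2: "perm (nswap b c) u = u" using c by simp
  have c3: "c \<noteq> a" "c \<noteq> b" using c by simp_all
  have "nswap a b = nswap a c \<circ> (nswap b c \<circ> nswap a c)" using c3 False
    by (auto simp: fun_eq_iff nswap_def)
  hence "perm (nswap a b) u = perm (nswap a c) (perm (nswap b c) (perm (nswap a c) u))"
    by (simp add: perm_comp bij_comp)
  thus ?thesis using c1 c2 by simp
qed simp

lemma supp_eqvt_subset: assumes "\<And>a b. f (perm (nswap a b) u) = perm (nswap a b) (f u)"
  shows "supp (f u) \<subseteq> supp u"
proof
  fix a assume "a \<in> supp (f u)"
  hence i: "infinite {b. perm (nswap a b) (f u) \<noteq> f u}" by (simp add: supp_def)
  have "{b. perm (nswap a b) (f u) \<noteq> f u} \<subseteq> {b. perm (nswap a b) u \<noteq> u}"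
  proof
    fix b assume "b \<in> {b. perm (nswap a b) (f u) \<noteq> f u}"
    hence ne: "perm (nswap a b) (f u) \<noteq> f u" by simp
    have "perm (nswap a b) u \<noteq> u"
    proof
      assume "perm (nswap a b) u = u"
      then have "f (perm (nswap a b) u) = f u" by simp
      with assms ne show False by simp
    qed
    thus "b \<in> {b. perm (nswap a b) u \<noteq> u}" by simp
  qed
  hence "infinite {b. perm (nswap a b) u \<noteq> u}" using i finite_subset by blast
  thus "a \<in> supp u" by (simp add: supp_def)
qed



lemma alpha_relI: "z \<noteq> x \<Longrightarrow> z \<noteq> y \<Longrightarrow> z \<notin> supp u \<Longrightarrow> z \<notin> supp v
  \<Longrightarrow> perm (nswap x z) u = perm (nswap y z) v \<Longrightarrow> alpha_rel (x,u) (y,v)"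
  unfolding alpha_rel_def by auto

lemma alpha_relE: "alpha_rel (x,u) (y,v) \<Longrightarrow> (\<And>z. z \<noteq> x \<Longrightarrow> z \<noteq> y \<Longrightarrow> z \<notin> supp u \<Longrightarrow> z \<notin> supp v
  \<Longrightarrow> perm (nswap x z) u = perm (nswap y z) v \<Longrightarrow> P) \<Longrightarrow> P"
  unfolding alpha_rel_def by auto

lemma bij_inj_eq: "bij p \<Longrightarrow> (p a = p b) = (a = b)"
  by (simp add: bij_is_inj inj_eq)

lemma alpha_rel_eqvt1: assumes p: "bij p" and a: "alpha_rel (y,v) (x,w)"
  shows "alpha_rel (p y, perm p v) (p x, perm p w)"
proof -
  obtain z where z: "z \<noteq> y" "z \<noteq> x" "z \<notin> supp v" "z \<notin> supp w"
    "perm (nswap y z) v = perm (nswap x z) w" using a by (rule alpha_relE)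
  show ?thesis
  proof (rule alpha_relI[where z="p z"])
    show "p z \<noteq> p y" "p z \<noteq> p x" using z p by (simp_all add: bij_inj_eq)
    show "p z \<notin> supp (perm p v)" "p z \<notin> supp (perm p w)" using z p
      by (simp_all add: supp_perm bij_is_inj inj_image_mem_iff)
    show "perm (nswap (p y) (p z)) (perm p v) = perm (nswap (p x) (p z)) (perm p w)"
      using z(5) p by (simp add: perm_swap_conj)
  qed
qed

lemma alpha_rel_eqvt: assumes p: "bij p"
  shows "alpha_rel (p y, perm p v) (p x, perm p w) = alpha_rel (y,v) (x,w)"
proof
  assume "alpha_rel (p y, perm p v) (p x, perm p w)"
  from alpha_rel_eqvt1[OF bij_imp_bij_inv[OF p] this] p
  show "alpha_rel (y,v) (x,w)" by (simp add: perm_inv_perm bij_is_inj)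
qed (rule alpha_rel_eqvt1[OF p])

lemma alpha_fin: assumes "alpha_rel (y,v) (x,w)" "finite (supp w)" shows "finite (supp v)"
proof -
  obtain z where "perm (nswap y z) v = perm (nswap x z) w" using assms(1) by (rule alpha_relE)
  hence "v = perm (nswap y z) (perm (nswap x z) w)" by (metis perm_swap_swap)
  thus ?thesis using assms(2) by (simp add: supp_perm)
qed

lemma alpha_unique: assumes a1: "alpha_rel (y,v1) (x,w)" and a2: "alpha_rel (y,v2) (x,w)" shows "v1 = v2"
proof -
  obtain z1 where z1: "z1 \<noteq> y" "z1 \<noteq> x" "z1 \<notin> supp v1" "z1 \<notin> supp w"
    and e1: "perm (nswap y z1) v1 = perm (nswap x z1) w" using a1 by (rule alpha_relE)
  obtain z2 where z2: "z2 \<noteq> y" "z2 \<noteq> x" "z2 \<notin> supp v2" "z2 \<notin> supp w"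
    and e2: "perm (nswap y z2) v2 = perm (nswap x z2) w" using a2 by (rule alpha_relE)
  have v1: "v1 = perm (nswap y z1) (perm (nswap x z1) w)" using e1 by (metis perm_swap_swap)
  have v2: "v2 = perm (nswap y z2) (perm (nswap x z2) w)" using e2 by (metis perm_swap_swap)
  show ?thesis
  proof (cases "z1 = z2")
    case True then show ?thesis using v1 v2 by simp
  next
    case False
    have w: "perm (nswap z1 z2) w = w" using fresh_swap[OF z1(4) z2(4)] .
    have f1: "nswap x z2 = nswap z1 z2 \<circ> (nswap x z1 \<circ> nswap z1 z2)" using False z1 z2
      by (auto simp: fun_eq_iff nswap_def)
    have "perm (nswap x z2) w = perm (nswap z1 z2) (perm (nswap x z1) (perm (nswap z1 z2) w))"
      by (simp add: f1 perm_comp bij_comp)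
    hence s1: "perm (nswap x z2) w = perm (nswap z1 z2) (perm (nswap y z1) v1)" using w e1 by simp
    have f2: "nswap y z2 \<circ> (nswap z1 z2 \<circ> nswap y z1) = nswap z1 z2" using False z1 z2
      by (auto simp: fun_eq_iff nswap_def)
    have "v2 = perm (nswap y z2) (perm (nswap z1 z2) (perm (nswap y z1) v1))" using v2 s1 by simp
    also have "\<dots> = perm (nswap z1 z2) v1" by (simp add: perm_comp bij_comp f2)
    finally have v2': "v2 = perm (nswap z1 z2) v1" .
    have "z2 \<notin> supp v1"
    proof
      assume "z2 \<in> supp v1"
      hence "z2 \<in> nswap y z1 ` nswap x z1 ` supp w" using v1 by (simp add: supp_perm)
      then obtain a where a: "a \<in> supp w" "z2 = nswap y z1 (nswap x z1 a)" by auto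
      hence "nswap x z1 (nswap y z1 z2) = a" by simp
      moreover have "nswap y z1 z2 = z2" "nswap x z1 z2 = z2" using z2 False by (auto simp: nswap_def)
      ultimately show False using a z2 by simp
    qed
    thus ?thesis using v2' fresh_swap[OF z1(3) \<open>z2 \<notin> supp v1\<close>] by simp
  qed
qed

lemma alpha_any: assumes a: "alpha_rel (y,v) (x,w)" and z: "z \<noteq> x" "z \<noteq> y" "z \<notin> supp v" "z \<notin> supp w"
  shows "perm (nswap y z) v = perm (nswap x z) w"
proof -
  obtain z1 where z1: "z1 \<noteq> y" "z1 \<noteq> x" "z1 \<notin> supp v" "z1 \<notin> supp w"
    and e1: "perm (nswap y z1) v = perm (nswap x z1) w" using a by (rule alpha_relE)
  show ?thesis
  proof (cases "z = z1")
    case False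
    have f1: "nswap y z \<circ> nswap z1 z = nswap z1 z \<circ> nswap y z1" using False z z1
      by (auto simp: fun_eq_iff nswap_def)
    have f2: "nswap x z \<circ> nswap z1 z = nswap z1 z \<circ> nswap x z1" using False z z1
      by (auto simp: fun_eq_iff nswap_def)
    have "perm (nswap y z) v = perm (nswap y z) (perm (nswap z1 z) v)" using fresh_swap[OF z1(3) z(3)] by simp
    also have "\<dots> = perm (nswap z1 z) (perm (nswap y z1) v)" by (simp add: perm_comp f1)
    also have "\<dots> = perm (nswap z1 z) (perm (nswap x z1) w)" using e1 by simp
    also have "\<dots> = perm (nswap x z) (perm (nswap z1 z) w)" by (simp add: perm_comp f2)
    also have "\<dots> = perm (nswap x z) w" using fresh_swap[OF z1(4) z(4)] by simp
    finally show ?thesis .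
  qed (use e1 in simp)
qed

lemma the_alpha: "alpha_rel (y,v) (x,w) \<Longrightarrow> (THE v. alpha_rel (y,v) (x,w)) = v"
  by (rule the_equality) (auto intro: alpha_unique)

lemma abs_class_eqvt: assumes p: "bij p"
  shows "perm p (abs_class x w) = abs_class (p x) (perm p w)"
proof -
  have "map_option (perm p) (if \<exists>v. alpha_rel (inv p y, v) (x, w) then Some (THE v. alpha_rel (inv p y, v) (x, w)) else None)
      = (if \<exists>v. alpha_rel (y, v) (p x, perm p w) then Some (THE v. alpha_rel (y, v) (p x, perm p w)) else None)" for y
  proof -
    have yy: "p (inv p y) = y" using p by (simp add: surj_f_inv_f bij_is_surj)
    have ex: "(\<exists>v. alpha_rel (y, v) (p x, perm p w)) = (\<exists>v. alpha_rel (inv p y, v) (x, w))"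
    proof
      assume "\<exists>v. alpha_rel (y, v) (p x, perm p w)"
      then obtain v where "alpha_rel (y, v) (p x, perm p w)" by blast
      hence "alpha_rel (p (inv p y), perm p (perm (inv p) v)) (p x, perm p w)" using yy p by (simp add: perm_perm_inv)
      thus "\<exists>v. alpha_rel (inv p y, v) (x, w)" using alpha_rel_eqvt[OF p] by blast
    next
      assume "\<exists>v. alpha_rel (inv p y, v) (x, w)"
      then obtain v where "alpha_rel (inv p y, v) (x, w)" by blast
      hence "alpha_rel (p (inv p y), perm p v) (p x, perm p w)" using alpha_rel_eqvt[OF p] by blast
      thus "\<exists>v. alpha_rel (y, v) (p x, perm p w)" using yy by auto
    qed
    show ?thesis
    proof (cases "\<exists>v. alpha_rel (inv p y, v) (x, w)")
      case True
      then obtain v where v: "alpha_rel (inv p y, v) (x, w)" by blast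
      hence v': "alpha_rel (y, perm p v) (p x, perm p w)" using alpha_rel_eqvt[OF p, of "inv p y" v x w] yy by simp
      show ?thesis using True ex the_alpha[OF v] the_alpha[OF v'] by simp
    next
      case False then show ?thesis using ex by simp
    qed
  qed
  thus ?thesis unfolding abs_class_def by (simp add: fun_eq_iff)
qed

lemma supp_fin_perm: "bij p \<Longrightarrow> finite (supp (perm p w)) = finite (supp w)"
proof -
  assume p: "bij p"
  have "inj_on p (supp w)" using p by (metis bij_is_inj inj_on_subset subset_UNIV)
  thus ?thesis using p by (simp add: supp_perm finite_image_iff)
qed

lemma abs_rename: assumes fw: "finite (supp w)" and b: "b \<notin> supp w"
  shows "abs_class x w = abs_class b (perm (nswap x b) w)"
proof (cases "b = x")
  case False
  let ?w' = "perm (nswap x b) w"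
  have fw': "finite (supp ?w')" using fw by (simp add: supp_fin_perm)
  have key: "alpha_rel (y,v) (x,w) = alpha_rel (y,v) (b, ?w')" for y v
  proof
    assume A: "alpha_rel (y,v) (x,w)"
    have fv: "finite (supp v)" using alpha_fin[OF A fw] .
    have "finite ({x,y,b} \<union> supp v \<union> supp w \<union> supp ?w')" using fv fw fw' by simp
    from fresh_ex[OF this] obtain z where z: "z \<notin> {x,y,b} \<union> supp v \<union> supp w \<union> supp ?w'" ..
    hence zz: "z \<noteq> x" "z \<noteq> y" "z \<noteq> b" "z \<notin> supp v" "z \<notin> supp w" "z \<notin> supp ?w'" by simp_all
    have e: "perm (nswap y z) v = perm (nswap x z) w" using alpha_any[OF A zz(1,2,4,5)] .
    have f: "nswap b z \<circ> nswap x b = nswap x z \<circ> nswap b z" using zz False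
      by (auto simp: fun_eq_iff nswap_def)
    have "perm (nswap b z) ?w' = perm (nswap x z) (perm (nswap b z) w)" by (simp add: perm_comp f)
    also have "\<dots> = perm (nswap x z) w" using fresh_swap[OF b zz(5)] by simp
    finally show "alpha_rel (y,v) (b, ?w')" using e zz by (intro alpha_relI[where z=z]) auto
  next
    assume A: "alpha_rel (y,v) (b, ?w')"
    have fv: "finite (supp v)" using alpha_fin[OF A fw'] .
    have "finite ({x,y,b} \<union> supp v \<union> supp w \<union> supp ?w')" using fv fw fw' by simp
    from fresh_ex[OF this] obtain z where z: "z \<notin> {x,y,b} \<union> supp v \<union> supp w \<union> supp ?w'" ..
    hence zz: "z \<noteq> x" "z \<noteq> y" "z \<noteq> b" "z \<notin> supp v" "z \<notin> supp w" "z \<notin> supp ?w'" by simp_all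
    have e: "perm (nswap y z) v = perm (nswap b z) ?w'" using alpha_any[OF A zz(3,2,4,6)] .
    have f: "nswap b z \<circ> nswap x b = nswap x z \<circ> nswap b z" using zz False
      by (auto simp: fun_eq_iff nswap_def)
    have "perm (nswap b z) ?w' = perm (nswap x z) (perm (nswap b z) w)" by (simp add: perm_comp f)
    also have "\<dots> = perm (nswap x z) w" using fresh_swap[OF b zz(5)] by simp
    finally show "alpha_rel (y,v) (x, w)" using e zz by (intro alpha_relI[where z=z]) auto
  qed
  show ?thesis unfolding abs_class_def key ..
qed simp

lemma abs_class_app: assumes fw: "finite (supp w)" and e: "abs_class x w = Abs g" shows "g x = Some w"
proof -
  have "finite ({x} \<union> supp w)" using fw by simp
  from fresh_ex[OF this] obtain z where z: "z \<notin> {x} \<union> supp w" ..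
  have A: "alpha_rel (x,w) (x,w)" using z by (intro alpha_relI[where z=z]) auto
  have "g = (\<lambda>y. if \<exists>v. alpha_rel (y, v) (x, w) then Some (THE v. alpha_rel (y, v) (x, w)) else None)"
    using e unfolding abs_class_def by simp
  thus ?thesis using A the_alpha[OF A] by auto
qed

lemma abs_inj: "finite (supp w1) \<Longrightarrow> finite (supp w2) \<Longrightarrow> abs_class x w1 = abs_class x w2 \<Longrightarrow> w1 = w2"
proof -
  assume f1: "finite (supp w1)" and f2: "finite (supp w2)" and e: "abs_class x w1 = abs_class x w2"
  obtain g where g: "abs_class x w1 = Abs g" by (simp add: abs_class_def)
  have "g x = Some w1" by (rule abs_class_app[OF f1 g])
  moreover have "g x = Some w2" by (rule abs_class_app[OF f2 g[unfolded e]])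
  ultimately show ?thesis by simp
qed



lemma perm_ident[simp]: "perm (\<lambda>a. a) u = u"
  using perm_id[of u] unfolding id_def .

lemma bij_ident[simp]: "bij (\<lambda>a. a)"
  using bij_id unfolding id_def .

lemma abs_class_eqvt_swap: "x \<noteq> a \<Longrightarrow> x \<noteq> b \<Longrightarrow>
  perm (nswap a b) (abs_class x w) = abs_class x (perm (nswap a b) w)"
  using abs_class_eqvt[of "nswap a b" x w] nswap_app(3)[of x a b] by simp

lemma supp_abs: assumes fw: "finite (supp w)" shows "supp (abs_class x w) = supp w - {x}"
proof (rule set_eqI)
  fix a
  show "a \<in> supp (abs_class x w) \<longleftrightarrow> a \<in> supp w - {x}"
  proof (cases "a \<in> supp w \<and> a \<noteq> x")
    case True
    have sub: "{b. perm (nswap a b) w \<noteq> w} - {x} \<subseteq> {b. perm (nswap a b) (abs_class x w) \<noteq> abs_class x w}"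
    proof
      fix b assume b: "b \<in> {b. perm (nswap a b) w \<noteq> w} - {x}"
      hence ne: "perm (nswap a b) w \<noteq> w" and bx: "b \<noteq> x" by auto
      have eq: "perm (nswap a b) (abs_class x w) = abs_class x (perm (nswap a b) w)"
        using abs_class_eqvt_swap[of x a b w] True bx by auto
      have fw': "finite (supp (perm (nswap a b) w))" using fw supp_fin_perm[of "nswap a b" w] by simp
      have "abs_class x (perm (nswap a b) w) \<noteq> abs_class x w"
      proof
        assume "abs_class x (perm (nswap a b) w) = abs_class x w"
        hence "perm (nswap a b) w = w" by (rule abs_inj[OF fw' fw])
        with ne show False ..
      qed
      thus "b \<in> {b. perm (nswap a b) (abs_class x w) \<noteq> abs_class x w}" using eq by simp
    qed
    have "infinite {b. perm (nswap a b) w \<noteq> w}" using True by (simp add: supp_def)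
    hence "infinite ({b. perm (nswap a b) w \<noteq> w} - {x})" by simp
    hence "infinite {b. perm (nswap a b) (abs_class x w) \<noteq> abs_class x w}" using sub finite_subset by blast
    thus ?thesis using True by (simp add: supp_def)
  next
    case False
    have sub: "{b. perm (nswap a b) (abs_class x w) \<noteq> abs_class x w} \<subseteq> supp w \<union> {x}"
    proof
      fix b assume b: "b \<in> {b. perm (nswap a b) (abs_class x w) \<noteq> abs_class x w}"
      show "b \<in> supp w \<union> {x}"
      proof (rule ccontr)
        assume nb: "b \<notin> supp w \<union> {x}"
        have "perm (nswap a b) (abs_class x w) = abs_class x w"
        proof (cases "a = x")
          case True
          have "perm (nswap a b) (abs_class x w) = abs_class b (perm (nswap x b) w)"
            using abs_class_eqvt[of "nswap a b" x w] True by (simp add: nswap_app)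
          also have "\<dots> = abs_class x w" using abs_rename[OF fw, of b x] nb by simp
          finally show ?thesis .
        next
          case False
          with \<open>\<not>(a \<in> supp w \<and> a \<noteq> x)\<close> have an: "a \<notin> supp w" by simp
          have "perm (nswap a b) (abs_class x w) = abs_class x (perm (nswap a b) w)"
            using abs_class_eqvt_swap[of x a b w] False nb by auto
          also have "\<dots> = abs_class x w" using fresh_swap[OF an, of b] nb by simp
          finally show ?thesis .
        qed
        with b show False by simp
      qed
    qed
    have "finite (supp w \<union> {x})" using fw by simp
    hence "finite {b. perm (nswap a b) (abs_class x w) \<noteq> abs_class x w}" using sub finite_subset by blast
    thus ?thesis using False by (simp add: supp_def)
  qed
qed

lemma foldr_abs_eqvt: "bij p \<Longrightarrow> perm p (foldr abs_class xs b) = foldr abs_class (map p xs) (perm p b)"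
  by (induction xs) (simp_all add: abs_class_eqvt)

lemma foldr_abs_fin: "finite (supp b) \<Longrightarrow> finite (supp (foldr abs_class xs b))"
  by (induction xs) (simp_all add: supp_abs)

lemma supp_foldr_abs: "finite (supp b) \<Longrightarrow> supp (foldr abs_class xs b) = supp b - set xs"
  by (induction xs) (auto simp: supp_abs foldr_abs_fin)

lemma chain_eq: "finite (supp b) \<Longrightarrow> finite (supp b') \<Longrightarrow> length xs = length xs'
  \<Longrightarrow> foldr abs_class xs b = foldr abs_class xs' b' \<Longrightarrow> \<exists>p. bij p \<and> b' = perm p b"
proof (induction xs arbitrary: xs' b b')
  case Nil then show ?case by (intro exI[of _ id]) simp
next
  case (Cons x rest)
  from Cons.prems obtain x' rest' where xs': "xs' = x' # rest'" by (cases xs') auto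
  let ?T = "foldr abs_class rest b"
  let ?T' = "foldr abs_class rest' b'"
  have fT: "finite (supp ?T)" "finite (supp ?T')" using Cons.prems foldr_abs_fin by auto
  have e: "abs_class x ?T = abs_class x' ?T'" using Cons.prems xs' by simp
  have "finite (supp ?T \<union> supp ?T')" using fT by simp
  from fresh_ex[OF this] obtain z where z: "z \<notin> supp ?T \<union> supp ?T'" ..
  have "abs_class z (perm (nswap x z) ?T) = abs_class z (perm (nswap x' z) ?T')"
    using e abs_rename[OF fT(1), of z x] abs_rename[OF fT(2), of z x'] z by simp
  moreover have "finite (supp (perm (nswap x z) ?T))" using fT(1) by (simp add: supp_perm)
  moreover have "finite (supp (perm (nswap x' z) ?T'))" using fT(2) by (simp add: supp_perm)
  ultimately have eq: "perm (nswap x z) ?T = perm (nswap x' z) ?T'" using abs_inj by blast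
  define \<tau> where "\<tau> = nswap x z \<circ> nswap x' z"
  have bt: "bij \<tau>" by (simp add: \<tau>_def bij_comp)
  have "?T = perm (nswap x z) (perm (nswap x' z) ?T')" using eq by (metis perm_swap_swap)
  also have "\<dots> = perm \<tau> ?T'" by (simp add: \<tau>_def perm_comp)
  also have "\<dots> = foldr abs_class (map \<tau> rest') (perm \<tau> b')" by (rule foldr_abs_eqvt[OF bt])
  finally have e2: "foldr abs_class rest b = foldr abs_class (map \<tau> rest') (perm \<tau> b')" .
  have fb: "finite (supp b)" "finite (supp (perm \<tau> b'))" using Cons.prems supp_fin_perm[OF bt] by auto
  have "length rest = length (map \<tau> rest')" using Cons.prems xs' by simp
  from Cons.IH[OF fb this e2] obtain q where q: "bij q" "perm \<tau> b' = perm q b" by blast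
  have "b' = perm (inv \<tau>) (perm q b)" using q bt by (metis perm_inv_perm)
  also have "\<dots> = perm (inv \<tau> \<circ> q) b" using bt q by (simp add: perm_comp bij_imp_bij_inv)
  finally have "b' = perm (inv \<tau> \<circ> q) b" .
  moreover have "bij (inv \<tau> \<circ> q)" using bt q by (intro bij_comp bij_imp_bij_inv)
  ultimately show ?case by blast
qed



primrec af :: "'op nv \<Rightarrow> bool" where
  "af Star = True"
| "af (Nm a) = True"
| "af (Inj c t) = af t"
| "af (Tup ts) = list_all af ts"
| "af (Pr s t) = (af s \<and> af t)"
| "af (Abs g) = False"

primrec names :: "'op nv \<Rightarrow> nat set" where
  "names Star = {}"
| "names (Nm a) = {a}"
| "names (Inj c t) = names t"
| "names (Tup ts) = \<Union> (set (map names ts))"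
| "names (Pr s t) = names s \<union> names t"
| "names (Abs g) = {}"

primrec nlist :: "'op nv \<Rightarrow> nat list" where
  "nlist Star = []"
| "nlist (Nm a) = [a]"
| "nlist (Inj c t) = nlist t"
| "nlist (Tup ts) = concat (map nlist ts)"
| "nlist (Pr s t) = nlist s @ nlist t"
| "nlist (Abs g) = []"

primrec bl :: "'op nv \<Rightarrow> nat list" where
  "bl Star = []"
| "bl (Nm a) = []"
| "bl (Inj c t) = bl t"
| "bl (Tup ts) = concat (map bl ts)"
| "bl (Pr s t) = nlist s @ bl t"
| "bl (Abs g) = []"

lemma names_perm: "names (perm p u) = p ` names u"
  by (induction u) (auto simp: image_Union)

lemma nlist_perm: "nlist (perm p u) = map p (nlist u)"
  by (induction u) (auto simp: map_concat cong: map_cong)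

lemma bl_perm: "bl (perm p u) = map p (bl u)"
  by (induction u) (auto simp: map_concat nlist_perm cong: map_cong)

lemma finite_names: "finite (names u)"
  by (induction u) auto

lemma af_perm: "af u \<Longrightarrow> af (perm p u)"
  by (induction u) (auto simp: list_all_iff)

lemma perm_af_cong: "af u \<Longrightarrow> (\<And>a. a \<in> names u \<Longrightarrow> p a = q a) \<Longrightarrow> perm p u = perm q u"
  by (induction u) (auto simp: list_all_iff cong: map_cong)

lemma perm_af_fix: "af u \<Longrightarrow> (\<And>a. a \<in> names u \<Longrightarrow> p a = a) \<Longrightarrow> perm p u = u"
  using perm_af_cong[of u p "\<lambda>a. a"] by simp

lemma perm_af_comp: "af u \<Longrightarrow> perm p (perm q u) = perm (p \<circ> q) u"
  by (induction u) (auto simp: list_all_iff cong: map_cong)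

lemma supp_af: assumes "af u" shows "supp u = names u"
proof (rule set_eqI)
  fix a show "a \<in> supp u \<longleftrightarrow> a \<in> names u"
  proof (cases "a \<in> names u")
    case True
    have "UNIV - names u \<subseteq> {b. perm (nswap a b) u \<noteq> u}"
    proof
      fix b assume b: "b \<in> UNIV - names u"
      have "b \<in> names (perm (nswap a b) u)" using True by (auto simp: names_perm nswap_app intro!: image_eqI[of _ _ a])
      thus "b \<in> {b. perm (nswap a b) u \<noteq> u}" using b by auto
    qed
    moreover have "infinite (UNIV - names u)" using finite_names[of u] by (simp add: Diff_infinite_finite)
    ultimately have "infinite {b. perm (nswap a b) u \<noteq> u}" using finite_subset by blast
    thus ?thesis using True by (simp add: supp_def)
  next
    case False
    have "{b. perm (nswap a b) u \<noteq> u} \<subseteq> names u"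
    proof
      fix b assume b: "b \<in> {b. perm (nswap a b) u \<noteq> u}"
      show "b \<in> names u"
      proof (rule ccontr)
        assume "b \<notin> names u"
        hence "perm (nswap a b) u = u" using False assms by (intro perm_af_fix) (auto simp: nswap_def)
        thus False using b by simp
      qed
    qed
    hence "finite {b. perm (nswap a b) u \<noteq> u}" using finite_names finite_subset by blast
    thus ?thesis using False by (simp add: supp_def)
  qed
qed

lemma Fset_cases: "v \<in> Fset ar X \<Longrightarrow> (\<And>a. v = Nm a \<Longrightarrow> P)
  \<Longrightarrow> (\<And>c ts. v = Inj c (Tup ts) \<Longrightarrow> list_all2 (\<lambda>k t. \<exists>xs w. length xs = k \<and> w \<in> X \<and> t = Pr (Tup (map Nm xs)) w) (ar c) ts \<Longrightarrow> P) \<Longrightarrow> P"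
  unfolding Fset_def by blast

lemma Faset_cases: "v \<in> Faset ar X \<Longrightarrow> (\<And>a. v = Nm a \<Longrightarrow> P)
  \<Longrightarrow> (\<And>c ts. v = Inj c (Tup ts) \<Longrightarrow> list_all2 (\<lambda>k t. t \<in> absn k X) (ar c) ts \<Longrightarrow> P) \<Longrightarrow> P"
  unfolding Faset_def by blast

lemma list_all2_in2: "list_all2 P ks ts \<Longrightarrow> t \<in> set ts \<Longrightarrow> \<exists>k\<in>set ks. P k t"
  by (induction rule: list_all2_induct) auto

lemma amap_Nm[simp]: "amap (Suc n) (Nm a) = Nm a"
  by simp

lemma amap_Inj: "amap (Suc n) (Inj c (Tup ts)) = Inj c (Tup (map (qfac \<circ> fmap_fac (amap n)) ts))"
  by simp

lemma qfac_Pr: "qfac (fmap_fac f (Pr (Tup (map Nm xs)) w)) = foldr abs_class xs (f w)"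
  by (induction xs) auto

lemma perm_Pr_Nm: "perm p (Pr (Tup (map Nm xs)) w) = Pr (Tup (map Nm (map p xs))) (perm p w)"
  by simp

lemma Fiter_af: "v \<in> Fiter ar n \<Longrightarrow> af v"
proof (induction n arbitrary: v)
  case (Suc n)
  from Suc.prems have "v \<in> Fset ar (Fiter ar n)" by simp
  then show ?case
  proof (rule Fset_cases)
    fix c ts assume 2: "v = Inj c (Tup ts)" "list_all2 (\<lambda>k t. \<exists>xs w. length xs = k \<and> w \<in> Fiter ar n \<and> t = Pr (Tup (map Nm xs)) w) (ar c) ts"
    have "\<forall>t\<in>set ts. af t"
    proof
      fix t assume "t \<in> set ts"
      from list_all2_in2[OF 2(2) this] obtain xs w where "w \<in> Fiter ar n" "t = Pr (Tup (map Nm xs)) w" by blast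
      thus "af t" using Suc.IH by (simp add: list_all_iff)
    qed
    thus ?case using 2 by (simp add: list_all_iff)
  qed simp
qed simp

lemma Fiter_perm: "v \<in> Fiter ar n \<Longrightarrow> perm p v \<in> Fiter ar n"
proof (induction n arbitrary: v)
  case (Suc n)
  from Suc.prems have "v \<in> Fset ar (Fiter ar n)" by simp
  then show ?case
  proof (rule Fset_cases)
    fix a assume "v = Nm a" then show ?case by (simp add: Fset_def)
  next
    fix c ts assume 2: "v = Inj c (Tup ts)" "list_all2 (\<lambda>k t. \<exists>xs w. length xs = k \<and> w \<in> Fiter ar n \<and> t = Pr (Tup (map Nm xs)) w) (ar c) ts"
    have "list_all2 (\<lambda>k t. \<exists>xs w. length xs = k \<and> w \<in> Fiter ar n \<and> t = Pr (Tup (map Nm xs)) w) (ar c) (map (perm p) ts)"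
      unfolding list_all2_map2 using 2(2)
    proof (rule list_all2_mono)
      fix k t assume "\<exists>xs w. length xs = k \<and> w \<in> Fiter ar n \<and> t = Pr (Tup (map Nm xs)) w"
      then obtain xs w where "length xs = k" "w \<in> Fiter ar n" "t = Pr (Tup (map Nm xs)) w" by blast
      thus "\<exists>xs w. length xs = k \<and> w \<in> Fiter ar n \<and> perm p t = Pr (Tup (map Nm xs)) w"
        using Suc.IH by (intro exI[of _ "map p xs"] exI[of _ "perm p w"]) simp
    qed
    thus ?case using 2 by (simp add: Fset_def)
  qed
qed simp

lemma amap_eqvt: "v \<in> Fiter ar n \<Longrightarrow> bij p \<Longrightarrow> amap n (perm p v) = perm p (amap n v)"
proof (induction n arbitrary: v)
  case (Suc n)
  from Suc.prems(1) have "v \<in> Fset ar (Fiter ar n)" by simp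
  then show ?case
  proof (rule Fset_cases)
    fix c ts assume 2: "v = Inj c (Tup ts)" "list_all2 (\<lambda>k t. \<exists>xs w. length xs = k \<and> w \<in> Fiter ar n \<and> t = Pr (Tup (map Nm xs)) w) (ar c) ts"
    have "map (qfac \<circ> fmap_fac (amap n)) (map (perm p) ts) = map (perm p) (map (qfac \<circ> fmap_fac (amap n)) ts)"
    proof (rule nth_equalityI)
      show "length (map (qfac \<circ> fmap_fac (amap n)) (map (perm p) ts)) = length (map (perm p) (map (qfac \<circ> fmap_fac (amap n)) ts))" by simp
    next
      fix i assume "i < length (map (qfac \<circ> fmap_fac (amap n)) (map (perm p) ts))"
      hence i: "i < length ts" by simp
      hence "ts ! i \<in> set ts" by simp
      from list_all2_in2[OF 2(2) this] obtain xs w where w: "w \<in> Fiter ar n" "ts ! i = Pr (Tup (map Nm xs)) w" by blast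
      have "qfac (fmap_fac (amap n) (perm p (ts ! i))) = perm p (qfac (fmap_fac (amap n) (ts ! i)))"
        unfolding w(2) perm_Pr_Nm qfac_Pr by (simp add: Suc.IH[OF w(1) Suc.prems(2)] foldr_abs_eqvt[OF Suc.prems(2)])
      thus "map (qfac \<circ> fmap_fac (amap n)) (map (perm p) ts) ! i = map (perm p) (map (qfac \<circ> fmap_fac (amap n)) ts) ! i"
        using i by simp
    qed
    thus ?case using 2 by (simp only: amap_Inj perm.simps)
  qed simp
qed simp

lemma supp_amap: assumes "v \<in> Fiter ar n" shows "supp (amap n v) \<subseteq> names v"
proof -
  have "supp (amap n v) \<subseteq> supp v"
    by (rule supp_eqvt_subset) (rule amap_eqvt[OF assms bij_nswap])
  thus ?thesis using supp_af[OF Fiter_af[OF assms]] by simp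
qed

lemma foldr_absn: "b \<in> X \<Longrightarrow> foldr abs_class xs b \<in> absn (length xs) X"
  by (induction xs) auto

lemma amap_in: "v \<in> Fiter ar n \<Longrightarrow> amap n v \<in> Faiter ar n"
proof (induction n arbitrary: v)
  case (Suc n)
  from Suc.prems have "v \<in> Fset ar (Fiter ar n)" by simp
  then show ?case
  proof (rule Fset_cases)
    fix a assume "v = Nm a" then show ?case by (simp add: Faset_def)
  next
    fix c ts assume 2: "v = Inj c (Tup ts)" "list_all2 (\<lambda>k t. \<exists>xs w. length xs = k \<and> w \<in> Fiter ar n \<and> t = Pr (Tup (map Nm xs)) w) (ar c) ts"
    have "list_all2 (\<lambda>k t. t \<in> absn k (Faiter ar n)) (ar c) (map (qfac \<circ> fmap_fac (amap n)) ts)"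
      unfolding list_all2_map2 using 2(2)
    proof (rule list_all2_mono)
      fix k t assume "\<exists>xs w. length xs = k \<and> w \<in> Fiter ar n \<and> t = Pr (Tup (map Nm xs)) w"
      then obtain xs w where xw: "length xs = k" "w \<in> Fiter ar n" "t = Pr (Tup (map Nm xs)) w" by blast
      show "(qfac \<circ> fmap_fac (amap n)) t \<in> absn k (Faiter ar n)"
        unfolding xw(3) comp_apply qfac_Pr xw(1)[symmetric] by (rule foldr_absn[OF Suc.IH[OF xw(2)]])
    qed
    thus ?case using 2 by (simp only: amap_Inj Faiter.simps) (simp add: Faset_def)
  qed
qed simp



lemma absn_perm: "(\<And>x. x \<in> X \<Longrightarrow> perm p x \<in> X) \<Longrightarrow> bij p \<Longrightarrow> t \<in> absn k X \<Longrightarrow> perm p t \<in> absn k X"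
proof (induction k arbitrary: t)
  case (Suc k)
  then obtain x w where "t = abs_class x w" "w \<in> absn k X" by auto
  thus ?case using Suc by (auto simp: abs_class_eqvt)
qed simp

lemma absn_fin: "(\<And>x. x \<in> X \<Longrightarrow> finite (supp x)) \<Longrightarrow> t \<in> absn k X \<Longrightarrow> finite (supp t)"
proof (induction k arbitrary: t)
  case (Suc k)
  then obtain x w where "t = abs_class x w" "w \<in> absn k X" by auto
  thus ?case using Suc by (simp add: supp_abs)
qed simp

lemma absn_decomp:
  assumes cl: "\<And>p x. bij p \<Longrightarrow> x \<in> X \<Longrightarrow> perm p x \<in> X" and fin: "\<And>x. x \<in> X \<Longrightarrow> finite (supp x)"
  shows "t \<in> absn k X \<Longrightarrow> finite S \<Longrightarrow> \<exists>zs b. length zs = k \<and> distinct zs \<and> set zs \<inter> S = {} \<and> b \<in> X \<and> t = foldr abs_class zs b"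
proof (induction k arbitrary: t S)
  case 0 then show ?case by (intro exI[of _ "[]"] exI[of _ t]) simp
next
  case (Suc k)
  then obtain x w where t: "t = abs_class x w" and w: "w \<in> absn k X" by auto
  have fw: "finite (supp w)" using absn_fin[OF fin w] .
  have "finite (S \<union> supp w)" using fw Suc.prems by simp
  from fresh_ex[OF this] obtain z where z: "z \<notin> S \<union> supp w" ..
  have t': "t = abs_class z (perm (nswap x z) w)" using abs_rename[OF fw, of z x] z t by simp
  have w': "perm (nswap x z) w \<in> absn k X" using absn_perm[OF cl[OF bij_nswap] bij_nswap w] .
  have "finite (S \<union> {z})" using Suc.prems by simp
  from Suc.IH[OF w' this] obtain zs b where zs: "length zs = k" "distinct zs" "set zs \<inter> (S \<union> {z}) = {}"
    "b \<in> X" "perm (nswap x z) w = foldr abs_class zs b" by blast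
  show ?case
    by (rule exI[of _ "z # zs"], rule exI[of _ b]) (use zs z t' in auto)
qed

lemma nlist_Tup_Nm[simp]: "nlist (Tup (map Nm xs)) = xs"
  by (induction xs) auto

lemma S4_list:
  assumes IH: "\<And>y S. y \<in> X \<Longrightarrow> finite S \<Longrightarrow> \<exists>u\<in>Y. f u = y \<and> distinct (bl u) \<and> set (bl u) \<inter> S = {}"
    and cl: "\<And>p x. bij p \<Longrightarrow> x \<in> X \<Longrightarrow> perm p x \<in> X" and fin: "\<And>x. x \<in> X \<Longrightarrow> finite (supp x)"
  shows "list_all2 (\<lambda>k t. t \<in> absn k X) ks ys \<Longrightarrow> finite S \<Longrightarrow> \<exists>ts.
     list_all2 (\<lambda>k t. \<exists>xs w. length xs = k \<and> w \<in> Y \<and> t = Pr (Tup (map Nm xs)) w) ks ts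
     \<and> map (qfac \<circ> fmap_fac f) ts = ys \<and> distinct (concat (map bl ts)) \<and> set (concat (map bl ts)) \<inter> S = {}"
proof (induction arbitrary: S rule: list_all2_induct)
  case Nil then show ?case by simp
next
  case (Cons k ks t ys)
  from absn_decomp[OF cl fin Cons.hyps(1) Cons.prems] obtain zs b where
    zs: "length zs = k" "distinct zs" "set zs \<inter> S = {}" "b \<in> X" "t = foldr abs_class zs b" by blast
  have "finite (S \<union> set zs)" using Cons.prems by simp
  from IH[OF zs(4) this] obtain u where u: "u \<in> Y" "f u = b" "distinct (bl u)" "set (bl u) \<inter> (S \<union> set zs) = {}" by blast
  define t0 where "t0 = Pr (Tup (map Nm zs)) u"
  have blt0: "bl t0 = zs @ bl u" unfolding t0_def bl.simps nlist_Tup_Nm ..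
  have "finite (S \<union> set (bl t0))" using Cons.prems by simp
  from Cons.IH[OF this] obtain ts where ts: "list_all2 (\<lambda>k t. \<exists>xs w. length xs = k \<and> w \<in> Y \<and> t = Pr (Tup (map Nm xs)) w) ks ts"
    "map (qfac \<circ> fmap_fac f) ts = ys" "distinct (concat (map bl ts))" "set (concat (map bl ts)) \<inter> (S \<union> set (bl t0)) = {}"
    by blast
  have q: "(qfac \<circ> fmap_fac f) t0 = t" unfolding t0_def comp_apply qfac_Pr using zs(5) u(2) by simp
  show ?case
  proof (rule exI[of _ "t0 # ts"], intro conjI)
    show "list_all2 (\<lambda>k t. \<exists>xs w. length xs = k \<and> w \<in> Y \<and> t = Pr (Tup (map Nm xs)) w) (k # ks) (t0 # ts)"
      using ts(1) zs(1) u(1) t0_def by auto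
    show "map (qfac \<circ> fmap_fac f) (t0 # ts) = t # ys" using q ts(2) by simp
    show "distinct (concat (map bl (t0 # ts)))" using ts(3,4) blt0 zs(2) u(3,4) by auto
    show "set (concat (map bl (t0 # ts))) \<inter> S = {}" using ts(4) blt0 zs(3) u(4) by auto
  qed
qed

lemma Faiter_props:
  assumes "\<And>y. y \<in> Faiter ar n \<Longrightarrow> \<exists>u\<in>Fiter ar n. amap n u = y"
  shows "\<And>(p::nat\<Rightarrow>nat) x. bij p \<Longrightarrow> x \<in> Faiter ar n \<Longrightarrow> perm p x \<in> Faiter ar n"
    and "\<And>x. x \<in> Faiter ar n \<Longrightarrow> finite (supp x)"
proof -
  fix p :: "nat \<Rightarrow> nat" and x assume p: "bij p" and x: "x \<in> Faiter ar n"
  then obtain u where u: "u \<in> Fiter ar n" "amap n u = x" using assms by blast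
  have "perm p x = amap n (perm p u)" using amap_eqvt[OF u(1) p] u(2) by simp
  thus "perm p x \<in> Faiter ar n" using amap_in[OF Fiter_perm[OF u(1)]] by simp
next
  fix x assume x: "x \<in> Faiter ar n"
  then obtain u where u: "u \<in> Fiter ar n" "amap n u = x" using assms by blast
  show "finite (supp x)" using supp_amap[OF u(1)] u(2) finite_names[of u] finite_subset by blast
qed

lemma S4: "y \<in> Faiter ar n \<Longrightarrow> finite S \<Longrightarrow> \<exists>u\<in>Fiter ar n. amap n u = y \<and> distinct (bl u) \<and> set (bl u) \<inter> S = {}"
proof (induction n arbitrary: y S)
  case 0 then show ?case by simp
next
  case (Suc n)
  have surj: "\<And>y. y \<in> Faiter ar n \<Longrightarrow> \<exists>u\<in>Fiter ar n. amap n u = y" using Suc.IH[of _ "{}"] by blast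
  note props = Faiter_props[OF surj]
  from Suc.prems(1) have "y \<in> Faset ar (Faiter ar n)" by simp
  then show ?case
  proof (rule Faset_cases)
    fix a assume "y = Nm a" then show ?case by (intro bexI[of _ "Nm a"]) (auto simp: Fset_def)
  next
    fix c ys assume y: "y = Inj c (Tup ys)" and ys: "list_all2 (\<lambda>k t. t \<in> absn k (Faiter ar n)) (ar c) ys"
    from S4_list[OF Suc.IH props ys Suc.prems(2)] obtain ts where
      ts: "list_all2 (\<lambda>k t. \<exists>xs w. length xs = k \<and> w \<in> Fiter ar n \<and> t = Pr (Tup (map Nm xs)) w) (ar c) ts"
      "map (qfac \<circ> fmap_fac (amap n)) ts = ys" "distinct (concat (map bl ts))" "set (concat (map bl ts)) \<inter> S = {}"
      by blast
    show ?case
    proof (rule bexI[of _ "Inj c (Tup ts)"])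
      show "Inj c (Tup ts) \<in> Fiter ar (Suc n)" using ts(1) by (auto simp: Fset_def)
      show "amap (Suc n) (Inj c (Tup ts)) = y \<and> distinct (bl (Inj c (Tup ts))) \<and> set (bl (Inj c (Tup ts))) \<inter> S = {}"
        using ts(2-4) y by (simp only: amap_Inj bl.simps)
    qed
  qed
qed

lemma surj_amap: "amap n ` Fiter ar n = Faiter ar n"
  using amap_in S4[of _ ar n "{}"] by blast

lemma surj_ex: "y \<in> Faiter ar n \<Longrightarrow> \<exists>u\<in>Fiter ar n. amap n u = y"
  using S4[of y ar n "{}"] by auto

lemma Faiter_perm: "bij p \<Longrightarrow> x \<in> Faiter ar n \<Longrightarrow> perm p x \<in> Faiter ar n"
  by (rule Faiter_props(1)[OF surj_ex])

lemma Faiter_fin: "x \<in> Faiter ar n \<Longrightarrow> finite (supp x)"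
  by (rule Faiter_props(2)[OF surj_ex])



lemma names_Tup_Nm[simp]: "names (Tup (map Nm xs)) = set xs"
  by (induction xs) auto

lemma set_bl_names: "set (bl u) \<subseteq> names u"
proof (induction u)
  case (Pr s t)
  have "set (nlist s) = names s" by (induction s) auto
  then show ?case using Pr by auto
qed auto

lemma supp_Tup_sub: assumes "t \<in> set ts" shows "supp t \<subseteq> supp (Inj c (Tup ts))"
proof
  fix a assume "a \<in> supp t"
  hence i: "infinite {b. perm (nswap a b) t \<noteq> t}" by (simp add: supp_def)
  have "{b. perm (nswap a b) t \<noteq> t} \<subseteq> {b. perm (nswap a b) (Inj c (Tup ts)) \<noteq> Inj c (Tup ts)}"
  proof
    fix b assume b: "b \<in> {b. perm (nswap a b) t \<noteq> t}"
    have "map (perm (nswap a b)) ts \<noteq> map (\<lambda>x. x) ts"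
      unfolding map_eq_conv using b assms by auto
    thus "b \<in> {b. perm (nswap a b) (Inj c (Tup ts)) \<noteq> Inj c (Tup ts)}" by simp
  qed
  hence "infinite {b. perm (nswap a b) (Inj c (Tup ts)) \<noteq> Inj c (Tup ts)}" using i finite_subset by blast
  thus "a \<in> supp (Inj c (Tup ts))" by (simp add: supp_def)
qed

lemma amap_fin: "v \<in> Fiter ar n \<Longrightarrow> finite (supp (amap n v))"
  using Faiter_fin[OF amap_in] .

lemma S1: "v \<in> Fiter ar n \<Longrightarrow> names v \<subseteq> set (bl v) \<union> supp (amap n v)"
proof (induction n arbitrary: v)
  case (Suc n)
  from Suc.prems have "v \<in> Fset ar (Fiter ar n)" by simp
  then show ?case
  proof (rule Fset_cases)
    fix a assume "v = Nm a" then show ?case by (simp add: supp_af)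
  next
    fix c ts assume v: "v = Inj c (Tup ts)" and ts: "list_all2 (\<lambda>k t. \<exists>xs w. length xs = k \<and> w \<in> Fiter ar n \<and> t = Pr (Tup (map Nm xs)) w) (ar c) ts"
    have "names t \<subseteq> set (bl t) \<union> supp (amap (Suc n) v)" if t: "t \<in> set ts" for t
    proof -
      from list_all2_in2[OF ts t] obtain xs w where w: "w \<in> Fiter ar n" "t = Pr (Tup (map Nm xs)) w" by blast
      have g: "(qfac \<circ> fmap_fac (amap n)) t = foldr abs_class xs (amap n w)" unfolding w(2) comp_apply qfac_Pr ..
      have "(qfac \<circ> fmap_fac (amap n)) t \<in> set (map (qfac \<circ> fmap_fac (amap n)) ts)" using t by simp
      hence s1: "supp (foldr abs_class xs (amap n w)) \<subseteq> supp (amap (Suc n) v)"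
        unfolding v amap_Inj g[symmetric] by (rule supp_Tup_sub)
      have s2: "supp (foldr abs_class xs (amap n w)) = supp (amap n w) - set xs"
        using supp_foldr_abs[OF amap_fin[OF w(1)]] .
      have "names w \<subseteq> set (bl w) \<union> supp (amap n w)" using Suc.IH[OF w(1)] .
      thus ?thesis using s1 s2 w(2) by auto
    qed
    thus ?case using v by auto
  qed
qed simp

lemma S2: assumes v: "v \<in> Fiter ar n" shows "card (names v) \<le> length (bl v) + card (supp (amap n v))"
proof -
  have "card (names v) \<le> card (set (bl v) \<union> supp (amap n v))"
    using S1[OF v] amap_fin[OF v] by (intro card_mono) auto
  also have "\<dots> \<le> card (set (bl v)) + card (supp (amap n v))" by (rule card_Un_le)
  also have "\<dots> \<le> length (bl v) + card (supp (amap n v))" using card_length by simp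
  finally show ?thesis .
qed

abbreviation sh :: "'op nv \<Rightarrow> 'op nv" where "sh v \<equiv> perm (\<lambda>_. 0) v"

lemma sh_perm: "af v \<Longrightarrow> sh (perm p v) = sh v"
  by (simp add: perm_af_comp comp_def)

lemma S3: "v \<in> Fiter ar n \<Longrightarrow> v' \<in> Fiter ar n \<Longrightarrow> amap n v = amap n v' \<Longrightarrow> sh v = sh v'"
proof (induction n arbitrary: v v')
  case (Suc n)
  from Suc.prems(1) have "v \<in> Fset ar (Fiter ar n)" by simp
  then show ?case
  proof (rule Fset_cases)
    fix a assume v: "v = Nm a"
    from Suc.prems(2) have "v' \<in> Fset ar (Fiter ar n)" by simp
    then show ?case
    proof (rule Fset_cases)
      fix c ts assume "v' = Inj c (Tup ts)"
      then show ?case using Suc.prems(3) v by (simp only: amap_Inj amap_Nm) simp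
    qed (use v in simp)
  next
    fix c ts assume v: "v = Inj c (Tup ts)" and ts: "list_all2 (\<lambda>k t. \<exists>xs w. length xs = k \<and> w \<in> Fiter ar n \<and> t = Pr (Tup (map Nm xs)) w) (ar c) ts"
    from Suc.prems(2) have "v' \<in> Fset ar (Fiter ar n)" by simp
    then show ?case
    proof (rule Fset_cases)
      fix a assume "v' = Nm a"
      then show ?case using Suc.prems(3) v by (simp only: amap_Inj amap_Nm) simp
    next
      fix c' ts' assume v': "v' = Inj c' (Tup ts')" and ts': "list_all2 (\<lambda>k t. \<exists>xs w. length xs = k \<and> w \<in> Fiter ar n \<and> t = Pr (Tup (map Nm xs)) w) (ar c') ts'"
      have e: "c = c'" "map (qfac \<circ> fmap_fac (amap n)) ts = map (qfac \<circ> fmap_fac (amap n)) ts'"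
        using Suc.prems(3) v v' by (simp_all only: amap_Inj) simp_all
      have len: "length ts = length ts'" using list_all2_lengthD[OF ts] list_all2_lengthD[OF ts'] e(1) by simp
      have "map sh ts = map sh ts'"
        unfolding map_equality_iff
      proof (intro conjI allI impI)
        show "length ts = length ts'" by (rule len)
      next
        fix i assume i: "i < length ts'"
        have i': "i < length ts" using i len by simp
        from ts i' obtain xs w where xw: "length xs = ar c ! i" "w \<in> Fiter ar n" "ts ! i = Pr (Tup (map Nm xs)) w"
          by (auto simp: list_all2_conv_all_nth)
        from ts' i obtain xs' w' where xw': "length xs' = ar c ! i" "w' \<in> Fiter ar n" "ts' ! i = Pr (Tup (map Nm xs')) w'"
          using e(1) by (auto simp: list_all2_conv_all_nth)
        have "(qfac \<circ> fmap_fac (amap n)) (ts ! i) = (qfac \<circ> fmap_fac (amap n)) (ts' ! i)"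
          using e(2) i i' by (metis nth_map)
        hence "foldr abs_class xs (amap n w) = foldr abs_class xs' (amap n w')"
          unfolding xw(3) xw'(3) comp_apply qfac_Pr .
        from chain_eq[OF amap_fin[OF xw(2)] amap_fin[OF xw'(2)] _ this] xw(1) xw'(1)
        obtain p where p: "bij p" "amap n w' = perm p (amap n w)" by auto
        have "amap n (perm p w) = amap n w'" using amap_eqvt[OF xw(2) p(1)] p(2) by simp
        hence "sh (perm p w) = sh w'" using Suc.IH[OF Fiter_perm[OF xw(2)] xw'(2)] by simp
        hence shw: "sh w = sh w'" using sh_perm[OF Fiter_af[OF xw(2)]] by simp
        show "sh (ts ! i) = sh (ts' ! i)" unfolding xw(3) xw'(3) using shw xw(1) xw'(1)
          by (simp add: map_equality_iff)
      qed
      thus ?case using v v' e(1) by simp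
    qed
  qed
qed simp

lemma bl_len_fibre: "v \<in> Fiter ar n \<Longrightarrow> v' \<in> Fiter ar n \<Longrightarrow> amap n v = amap n v' \<Longrightarrow> length (bl v) = length (bl v')"
  using S3[of v ar n v'] bl_perm[of "\<lambda>_. 0" v] bl_perm[of "\<lambda>_. 0" v'] by (metis length_map)

lemma safe: "safe_map (amap n) (Fiter ar n) (Faiter ar n)"
  unfolding safe_map_def
proof
  fix y assume y: "y \<in> Faiter ar n"
  from S4[OF y Faiter_fin[OF y]] obtain u where u: "u \<in> Fiter ar n" "amap n u = y" "distinct (bl u)" "set (bl u) \<inter> supp y = {}"
    by blast
  have "f_safe (amap n) (Fiter ar n) u"
    unfolding f_safe_def
  proof (intro conjI ballI impI)
    show "u \<in> Fiter ar n" by (rule u(1))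
    fix v assume v: "v \<in> Fiter ar n" and e: "amap n v = amap n u"
    have "card (supp v) = card (names v)" using supp_af[OF Fiter_af[OF v]] by simp
    also have "\<dots> \<le> length (bl v) + card (supp y)" using S2[OF v] e u(2) by simp
    also have "\<dots> = length (bl u) + card (supp y)" using bl_len_fibre[OF v u(1) e] by simp
    also have "\<dots> = card (set (bl u)) + card (supp y)" using distinct_card[OF u(3)] by simp
    also have "\<dots> = card (set (bl u) \<union> supp y)" using u(4) Faiter_fin[OF y] by (simp add: card_Un_disjoint)
    also have "\<dots> \<le> card (names u)"
      using set_bl_names[of u] supp_amap[OF u(1)] u(2) finite_names[of u] by (intro card_mono) auto
    also have "\<dots> = card (supp u)" using supp_af[OF Fiter_af[OF u(1)]] by simp
    finally show "card (supp v) \<le> card (supp u)" .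
  qed
  thus "\<exists>u. f_safe (amap n) (Fiter ar n) u \<and> amap n u = y" using u(2) by blast
qed



lemma fperm_bij: "fperm p \<Longrightarrow> bij p" by (simp add: fperm_def)

lemma fperm_comp: assumes "fperm p" "fperm q" shows "fperm (p \<circ> q)"
proof -
  have s: "{a. (p \<circ> q) a \<noteq> a} \<subseteq> {a. q a \<noteq> a} \<union> {a. p a \<noteq> a}" by auto
  have f: "finite ({a. q a \<noteq> a} \<union> {a. p a \<noteq> a})" using assms by (simp add: fperm_def)
  have "bij (p \<circ> q)" using assms by (simp add: fperm_def bij_comp)
  thus ?thesis using finite_subset[OF s f] by (simp add: fperm_def)
qed

lemma fperm_inv: assumes "fperm p" shows "fperm (inv p)"
proof -
  have b: "bij p" using assms fperm_def by simp
  have s: "{a. inv p a \<noteq> a} \<subseteq> p ` {a. p a \<noteq> a}"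
  proof
    fix a assume "a \<in> {a. inv p a \<noteq> a}"
    hence ne: "inv p a \<noteq> a" by simp
    have pa: "p (inv p a) = a" using b by (simp add: bij_is_surj surj_f_inv_f)
    have "inv p a \<in> {a. p a \<noteq> a}" using ne pa by simp
    thus "a \<in> p ` {a. p a \<noteq> a}" using pa by (metis image_eqI)
  qed
  have f: "finite (p ` {a. p a \<noteq> a})" using assms by (simp add: fperm_def)
  show ?thesis using finite_subset[OF s f] bij_imp_bij_inv[OF b] by (simp add: fperm_def)
qed

lemma fperm_swap: "fperm (nswap a b)"
proof -
  have s: "{c. nswap a b c \<noteq> c} \<subseteq> {a,b}" by (auto simp: nswap_def)
  show ?thesis using finite_subset[OF s] by (simp add: fperm_def)
qed

lemma fperm_id: "fperm id" by (simp add: fperm_def)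

lemma orbit_perm: assumes p: "fperm p" shows "orbit (perm p v) = orbit v"
proof
  have b: "bij p" using p by (rule fperm_bij)
  show "orbit (perm p v) \<subseteq> orbit v"
  proof
    fix x assume "x \<in> orbit (perm p v)"
    then obtain q where q: "fperm q" "x = perm q (perm p v)" by (auto simp: orbit_def)
    hence "x = perm (q \<circ> p) v" using b by (simp add: perm_comp fperm_bij)
    thus "x \<in> orbit v" using fperm_comp[OF q(1) p] by (auto simp: orbit_def)
  qed
  show "orbit v \<subseteq> orbit (perm p v)"
  proof
    fix x assume "x \<in> orbit v"
    then obtain q where q: "fperm q" "x = perm q v" by (auto simp: orbit_def)
    have bq: "bij (q \<circ> inv p)" using fperm_bij[OF fperm_comp[OF q(1) fperm_inv[OF p]]] .
    have "perm (q \<circ> inv p) (perm p v) = perm (q \<circ> inv p \<circ> p) v" using perm_comp[OF bq b] .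
    also have "q \<circ> inv p \<circ> p = q" using b by (simp add: o_assoc[symmetric] bij_is_inj)
    finally have e: "perm (q \<circ> inv p) (perm p v) = perm q v" .
    have "x = perm (q \<circ> inv p) (perm p v)" unfolding e q(2) ..
    thus "x \<in> orbit (perm p v)" using fperm_comp[OF q(1) fperm_inv[OF p]] by (auto simp: orbit_def)
  qed
qed

lemma perm_into: "finite A \<Longrightarrow> finite B \<Longrightarrow> card A \<le> card B \<Longrightarrow> \<exists>p. fperm p \<and> p ` A \<subseteq> B"
proof (induction "card (A - B)" arbitrary: A rule: less_induct)
  case less
  show ?case
  proof (cases "A \<subseteq> B")
    case True then show ?thesis using fperm_id by (intro exI[of _ id]) auto
  next
    case False
    then obtain a where a: "a \<in> A" "a \<notin> B" by auto
    have "\<not> B \<subseteq> A"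
    proof
      assume "B \<subseteq> A"
      hence "B \<subseteq> A - {a}" using a by auto
      hence "card B \<le> card (A - {a})" using less.prems by (intro card_mono) auto
      also have "\<dots> < card A" using a less.prems by (intro card_Diff1_less) auto
      finally show False using less.prems by simp
    qed
    then obtain b where b: "b \<in> B" "b \<notin> A" by auto
    let ?A' = "nswap a b ` A"
    have fA': "finite ?A'" using less.prems by simp
    have inj: "inj (nswap a b)" by (rule bij_is_inj) simp
    have cA': "card ?A' = card A" using card_image[OF inj_on_subset[OF inj subset_UNIV]] .
    have sub: "?A' - B \<subseteq> (A - B) - {a}"
    proof
      fix x assume "x \<in> ?A' - B"
      then obtain y where y: "y \<in> A" "x = nswap a b y" "x \<notin> B" by auto
      have ya: "y \<noteq> a" using y b by (auto simp: nswap_app)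
      have "y \<noteq> b" using y b by auto
      hence "x = y" using y ya by (simp add: nswap_app)
      thus "x \<in> (A - B) - {a}" using y ya by auto
    qed
    have "card (?A' - B) < card (A - B)"
    proof -
      have "card (?A' - B) \<le> card ((A - B) - {a})" using sub less.prems by (intro card_mono) auto
      also have "\<dots> < card (A - B)" using a less.prems by (intro card_Diff1_less) auto
      finally show ?thesis .
    qed
    from less.hyps[OF this fA' less.prems(2)] cA' less.prems(3) obtain q where q: "fperm q" "q ` ?A' \<subseteq> B" by auto
    have "(q \<circ> nswap a b) ` A \<subseteq> B" using q(2) by (simp add: image_comp)
    thus ?thesis using fperm_comp[OF q(1) fperm_swap] by blast
  qed
qed

fun pbody :: "'op nv \<Rightarrow> 'op nv" where
  "pbody (Pr a b) = b"
| "pbody _ = Star"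

lemma FIN: "finite K \<Longrightarrow> finite {w \<in> Fiter ar n. sh w = S \<and> names w \<subseteq> K}"
proof (induction n arbitrary: S)
  case 0 show ?case by (rule finite_subset[of _ "{Star}"]) auto
next
  case (Suc n)
  show ?case
  proof (cases "\<exists>c ss. S = Inj c (Tup ss)")
    case False
    have "{w \<in> Fiter ar (Suc n). sh w = S \<and> names w \<subseteq> K} \<subseteq> Nm ` K"
    proof
      fix v assume v: "v \<in> {w \<in> Fiter ar (Suc n). sh w = S \<and> names w \<subseteq> K}"
      hence "v \<in> Fset ar (Fiter ar n)" by simp
      then show "v \<in> Nm ` K"
      proof (rule Fset_cases)
        fix a assume "v = Nm a" thus ?thesis using v by auto
      next
        fix c ts assume "v = Inj c (Tup ts)" thus ?thesis using v False by auto
      qed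
    qed
    moreover have "finite (Nm ` K)" using Suc.prems by simp
    ultimately show ?thesis using finite_subset by blast
  next
    case True
    then obtain c ss where S: "S = Inj c (Tup ss)" by blast
    define L where "L = sum_list (ar c)"
    define W where "W = (\<Union>s\<in>set ss. {w \<in> Fiter ar n. sh w = pbody s \<and> names w \<subseteq> K})"
    define A where "A = (\<lambda>(xs, w). Pr (Tup (map Nm xs)) w) ` ({xs. set xs \<subseteq> K \<and> length xs \<le> L} \<times> W)"
    have fW: "finite W" unfolding W_def using Suc.IH[OF Suc.prems] by auto
    have fA: "finite A" unfolding A_def using fW finite_lists_length_le[OF Suc.prems] by auto
    have "{w \<in> Fiter ar (Suc n). sh w = S \<and> names w \<subseteq> K} \<subseteq> Nm ` K \<union> (\<lambda>ts. Inj c (Tup ts)) ` {ts. set ts \<subseteq> A \<and> length ts = length ss}"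
    proof
      fix v assume v: "v \<in> {w \<in> Fiter ar (Suc n). sh w = S \<and> names w \<subseteq> K}"
      hence "v \<in> Fset ar (Fiter ar n)" by simp
      then show "v \<in> Nm ` K \<union> (\<lambda>ts. Inj c (Tup ts)) ` {ts. set ts \<subseteq> A \<and> length ts = length ss}"
      proof (rule Fset_cases)
        fix a assume "v = Nm a" thus ?thesis using v by auto
      next
        fix c' ts assume vt: "v = Inj c' (Tup ts)" and ts: "list_all2 (\<lambda>k t. \<exists>xs w. length xs = k \<and> w \<in> Fiter ar n \<and> t = Pr (Tup (map Nm xs)) w) (ar c') ts"
        have cc: "c' = c" and mss: "map sh ts = ss" using v vt S by auto
        have "set ts \<subseteq> A"
        proof
          fix t assume t: "t \<in> set ts"
          from list_all2_in2[OF ts t] obtain k xs w where k: "k \<in> set (ar c')" "length xs = k" "w \<in> Fiter ar n" "t = Pr (Tup (map Nm xs)) w" by blast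
          have st: "sh t \<in> set ss" using t mss by auto
          have pb: "pbody (sh t) = sh w" using k(4) by simp
          have nt: "names t \<subseteq> K" using v vt t by auto
          have "w \<in> {w \<in> Fiter ar n. sh w = pbody (sh t) \<and> names w \<subseteq> K}" using k(3,4) pb nt by auto
          hence wW: "w \<in> W" unfolding W_def using st by blast
          have "length xs \<le> L" unfolding L_def using k(1,2) cc member_le_sum_list by blast
          moreover have "set xs \<subseteq> K" using nt k(4) by auto
          ultimately show "t \<in> A" unfolding A_def using k(4) wW by auto
        qed
        moreover have "length ts = length ss" using mss by auto
        ultimately show ?thesis using vt cc by auto
      qed
    qed
    moreover have "finite (Nm ` K \<union> (\<lambda>ts. Inj c (Tup ts)) ` {ts. set ts \<subseteq> A \<and> length ts = length ss})"
      using Suc.prems finite_lists_length_eq[OF fA] by auto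
    ultimately show ?thesis using finite_subset by blast
  qed
qed

lemma orbfin: "orbit_finite_fibres (amap n) (Fiter ar n) (Faiter ar n)"
  unfolding orbit_finite_fibres_def
proof
  fix y assume y: "y \<in> Faiter ar n"
  obtain u0 where u0: "u0 \<in> Fiter ar n" "amap n u0 = y" using surj_ex[OF y] by blast
  define N where "N = length (bl u0) + card (supp y)"
  define Fin where "Fin = {w \<in> Fiter ar n. sh w = sh u0 \<and> names w \<subseteq> {..<N}}"
  have fF: "finite Fin" unfolding Fin_def by (rule FIN) simp
  have "orbit ` {x \<in> Fiter ar n. amap n x = y} \<subseteq> orbit ` Fin"
  proof
    fix ob assume "ob \<in> orbit ` {x \<in> Fiter ar n. amap n x = y}"
    then obtain v where v: "v \<in> Fiter ar n" "amap n v = y" "ob = orbit v" by blast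
    have "card (names v) \<le> N" using S2[OF v(1)] bl_len_fibre[OF v(1) u0(1)] v(2) u0(2) N_def by simp
    hence "card (names v) \<le> card {..<N}" by simp
    from perm_into[OF finite_names _ this] obtain p where p: "fperm p" "p ` names v \<subseteq> {..<N}" by auto
    have "perm p v \<in> Fin" unfolding Fin_def
      using Fiter_perm[OF v(1)] sh_perm[OF Fiter_af[OF v(1)]] S3[OF v(1) u0(1)] v(2) u0(2) p(2)
      by (simp add: names_perm)
    moreover have "orbit (perm p v) = ob" using orbit_perm[OF p(1)] v(3) by simp
    ultimately show "ob \<in> orbit ` Fin" by blast
  qed
  thus "finite (orbit ` {x \<in> Fiter ar n. amap n x = y})" using finite_subset fF by blast
qed

theorem proposition5p34:
  fixes ar :: "'op::countable \<Rightarrow> nat list" and n :: nat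
  shows "amap n ` Fiter ar n = Faiter ar n
       \<and> orbit_finite_fibres (amap n) (Fiter ar n) (Faiter ar n)
       \<and> safe_map (amap n) (Fiter ar n) (Faiter ar n)"
  using surj_amap orbfin safe by blast

end
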